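(* Let $X$ be a continuum and $T\subset X$ a thick subcontinuum. Then $T$ contains every null-aposyndetic point of $X$.
   Context: A continuum is a nondegenerate compact connected Hausdorff space. A subcontinuum $T\subset X$ is thick if $T\neq X$ and $T$ has nonempty interior. A point $x\in X$ is null-aposyndetic if no proper subcontinuum of $X$ contains $x$ in its interior. *)

theory Defs
  imports "HOL-Analysis.Analysis"
begin

definition continuum :: "'a topology \<Rightarrow> bool" where
  "continuum X \<longleftrightarrow> compact_space X \<and> connected_space X \<and> Hausdorff_space X \<and>
     (\<exists>x y. x \<in> topspace X \<and> y \<in> topspace X \<and> x \<noteq> y)"

definition subcontinuum :: "'a topology \<Rightarrow> 'a set \<Rightarrow> bool" where
  "subcontinuum X T \<longleftrightarrow> T \<subseteq> topspace X \<and> continuum (subtopology X T)"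

definition thick :: "'a topology \<Rightarrow> 'a set \<Rightarrow> bool" where
  "thick X T \<longleftrightarrow> subcontinuum X T \<and> T \<noteq> topspace X \<and> X interior_of T \<noteq> {}"

definition null_aposyndetic :: "'a topology \<Rightarrow> 'a \<Rightarrow> bool" where
  "null_aposyndetic X x \<longleftrightarrow> x \<in> topspace X \<and>
     (\<forall>T. subcontinuum X T \<and> T \<noteq> topspace X \<longrightarrow> x \<notin> X interior_of T)"

end

theory Submission
  imports Defs
begin

lemma subcont_intro:
  assumes "Hausdorff_space X" "compactin X M" "connectedin X M" "a \<in> M" "b \<in> M" "a \<noteq> b"
  shows "subcontinuum X M"
proof -
  have MS: "M \<subseteq> topspace X" using assms(2) compactin_subset_topspace by blast
  have "compact_space (subtopology X M)" using assms(2) by (rule compact_space_subtopology)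
  moreover have "connected_space (subtopology X M)" using assms(3) by (simp add: connectedin_def)
  moreover have "Hausdorff_space (subtopology X M)" using assms(1) by (rule Hausdorff_space_subtopology)
  moreover have "topspace (subtopology X M) = M" using MS by (rule topspace_subtopology_subset)
  ultimately show ?thesis unfolding subcontinuum_def continuum_def
    using MS assms(4-6) by auto
qed

lemma clopen_union_connected:
  assumes bump: "\<And>C. C \<in> connected_components_of (subtopology X Y) \<Longrightarrow> C \<inter> T \<noteq> {}"
    and T: "connectedin X T" "T \<noteq> {}"
    and A: "closedin (subtopology X Y) A" "openin (subtopology X Y) A"
  shows "connectedin X (A \<union> T)"
proof -
  let ?K = "\<lambda>a. connected_component_of_set (subtopology X Y) a"
  have AY: "A \<subseteq> topspace (subtopology X Y)" using A(1) closedin_subset by blast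
  have sub: "?K a \<subseteq> A" if "a \<in> A" for a
  proof -
    have "?K a \<subseteq> A \<or> disjnt (?K a) A"
      using connectedin_clopen_cases[OF connectedin_connected_component_of A] by blast
    moreover have "a \<in> ?K a" using that AY connected_component_of_refl by fastforce
    ultimately show ?thesis using that by (auto simp: disjnt_def)
  qed
  have conK: "connectedin X (?K a \<union> T)" if "a \<in> A" for a
  proof (rule connectedin_Un)
    show "connectedin X (?K a)"
      using connectedin_connected_component_of[of "subtopology X Y" a]
      unfolding connectedin_subtopology by simp
    show "connectedin X T" by fact
    have "a \<in> topspace (subtopology X Y)" using AY that by blast
    then have "?K a \<in> connected_components_of (subtopology X Y)"
      by (simp add: connected_component_in_connected_components_of)
    then show "?K a \<inter> T \<noteq> {}" by (rule bump)
  qed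
  let ?U = "insert T ((\<lambda>a. ?K a \<union> T) ` A)"
  have "connectedin X (\<Union>?U)"
  proof (rule connectedin_Union)
    show "\<And>S. S \<in> ?U \<Longrightarrow> connectedin X S" using conK T by auto
    have "T \<subseteq> \<Inter>?U" by auto
    then show "\<Inter>?U \<noteq> {}" using T by blast
  qed
  moreover have "\<Union>?U = A \<union> T"
  proof -
    have "A \<subseteq> (\<Union>a\<in>A. ?K a)"
      using AY connected_component_of_refl by fastforce
    then show ?thesis using sub by auto
  qed
  ultimately show ?thesis by simp
qed

theorem mainTheorem16:
  fixes X :: "'a topology" and T :: "'a set" and x :: 'a
  assumes "continuum X" and "thick X T" and "null_aposyndetic X x"
  shows "x \<in> T"
proof (rule ccontr)
  assume xT: "x \<notin> T"
  define S where "S = topspace X"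
  define I where "I = X interior_of T"
  define Y where "Y = S - I"
  have cX: "compact_space X" "connected_space X" "Hausdorff_space X"
    using assms(1) unfolding continuum_def by auto
  have TS: "T \<subseteq> S" and Tc: "continuum (subtopology X T)" and TnS: "T \<noteq> S" and Ine: "I \<noteq> {}"
    using assms(2) unfolding thick_def subcontinuum_def S_def I_def by auto
  have xS: "x \<in> S" and nap: "\<And>M. subcontinuum X M \<Longrightarrow> M \<noteq> S \<Longrightarrow> x \<notin> X interior_of M"
    using assms(3) unfolding null_aposyndetic_def S_def by auto
  have Tcomp: "compactin X T" using Tc TS unfolding continuum_def S_def
    by (simp add: compactin_subspace)
  have Tclo: "closedin X T" using compactin_imp_closedin cX(3) Tcomp by blast
  have Tcon: "connectedin X T" using Tc TS unfolding continuum_def S_def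
    by (simp add: connectedin_def)
  have IT: "I \<subseteq> T" unfolding I_def by (rule interior_of_subset)
  have Iop: "openin X I" unfolding I_def by simp
  have Tne: "T \<noteq> {}" using IT Ine by blast
  obtain t where tT: "t \<in> T" using Tne by blast
  have Yclo: "closedin X Y" unfolding Y_def S_def using Iop by blast
  have IS: "I \<subseteq> S" using IT TS by blast
  have YnS: "Y \<noteq> S" unfolding Y_def using Ine IS by blast
  have xY: "x \<in> Y" unfolding Y_def using xS xT IT by blast
  have STY: "S - T \<subseteq> Y" unfolding Y_def using IT by blast
  have STop: "openin X (S - T)" unfolding S_def using Tclo by blast
  let ?Xy = "subtopology X Y"
  have Ytop: "topspace ?Xy = Y" using Yclo closedin_subset unfolding S_def by auto
  have Xycomp: "compact_space ?Xy"
    using compact_space_subtopology closedin_compact_space cX(1) Yclo by blast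
  have XyH: "Hausdorff_space ?Xy" using Hausdorff_space_subtopology cX(3) by blast
  have front: "X frontier_of Y \<subseteq> T"
  proof -
    have "S - T \<subseteq> X interior_of Y" using interior_of_maximal[OF STY STop] .
    moreover have "X closure_of Y = Y" using Yclo closure_of_closedin by blast
    ultimately show ?thesis unfolding frontier_of_def Y_def by auto
  qed
  have bump: "C \<inter> T \<noteq> {}" if "C \<in> connected_components_of ?Xy" for C
  proof -
    have "C \<inter> X frontier_of Y \<noteq> {}"
      using boundary_bumping_theorem_closed[OF cX(2) cX(1) cX(3) Yclo] YnS that
      unfolding S_def by blast
    then show ?thesis using front by blast
  qed
  define C where "C = connected_component_of_set ?Xy x"
  have Ccomp: "C \<in> connected_components_of ?Xy"
    unfolding C_def connected_component_in_connected_components_of Ytop using xY .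
  have CY: "C \<subseteq> Y" unfolding C_def
    using connected_component_of_subset_topspace[of ?Xy x] unfolding Ytop .
  have xC: "x \<in> C" unfolding C_def
    using xY connected_component_of_refl[of ?Xy x] unfolding Ytop by simp
  show False
  proof (cases "S - T \<subseteq> C")
    case True
    have Cclo: "closedin X C"
      using closedin_connected_components_of[OF Ccomp] Yclo closedin_trans_full by blast
    have Ccpt: "compactin X C" using closedin_compact_space cX(1) Cclo by blast
    have Ccon: "connectedin X C"
      using connectedin_connected_component_of[of ?Xy x]
      unfolding connectedin_subtopology C_def by simp
    obtain c where "c \<in> C" "c \<in> T" using bump[OF Ccomp] by blast
    then have "subcontinuum X C"
      using subcont_intro[OF cX(3) Ccpt Ccon xC] xT by metis
    moreover have "C \<noteq> S" using CY YnS Y_def Ine IS by blast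
    moreover have "x \<in> X interior_of C"
      using interior_of_maximal[OF True STop] xS xT by blast
    ultimately show False using nap by blast
  next
    case False
    then obtain y where yST: "y \<in> S - T" and yC: "y \<notin> C" by blast
    have "quasi_component_of ?Xy x = connected_component_of ?Xy x"
      by (rule quasi_eq_connected_component_of) (simp add: Xycomp XyH)
    then have "\<not> quasi_component_of ?Xy x y" using yC unfolding C_def by simp
    moreover have "y \<in> topspace ?Xy" "x \<in> topspace ?Xy" using xY yST STY Ytop by auto
    ultimately have "\<exists>A. closedin ?Xy A \<and> openin ?Xy A \<and> \<not> (x \<in> A \<longleftrightarrow> y \<in> A)"
      unfolding quasi_component_of_def by blast
    then obtain A0 where A0: "closedin ?Xy A0" "openin ?Xy A0" "\<not> (x \<in> A0 \<longleftrightarrow> y \<in> A0)"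
      by blast
    have "\<exists>A. closedin ?Xy A \<and> openin ?Xy A \<and> x \<in> A \<and> y \<notin> A"
    proof (cases "x \<in> A0")
      case True
      then show ?thesis using A0 by blast
    next
      case False
      then have "y \<in> A0" using A0(3) by blast
      moreover have "closedin ?Xy (topspace ?Xy - A0)" using A0(2) by blast
      moreover have "openin ?Xy (topspace ?Xy - A0)" using A0(1) by blast
      ultimately show ?thesis using False \<open>x \<in> topspace ?Xy\<close> by blast
    qed
    then obtain A where A: "closedin ?Xy A" "openin ?Xy A" "x \<in> A" "y \<notin> A"
      by blast
    define M where "M = A \<union> T"
    have Aclo: "closedin X A" using A(1) Yclo closedin_closed_subtopology by blast
    have Mcpt: "compactin X M" unfolding M_def
      using Aclo Tclo closedin_Un closedin_compact_space cX(1) by blast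
    have Mcon: "connectedin X M" unfolding M_def
      using clopen_union_connected[OF bump Tcon Tne A(1) A(2)] by blast
    have "subcontinuum X M"
      using subcont_intro[OF cX(3) Mcpt Mcon, of x t] A(3) tT xT unfolding M_def by blast
    moreover have "M \<noteq> S" using yST A(4) unfolding M_def by blast
    moreover have "x \<in> X interior_of M"
    proof -
      obtain Ou where O: "openin X Ou" "A = Ou \<inter> Y" using A(2) unfolding openin_subtopology by auto
      have "Ou \<inter> (S - T) \<subseteq> M" using O STY unfolding M_def by blast
      moreover have "openin X (Ou \<inter> (S - T))" using O(1) STop by (rule openin_Int)
      ultimately have "Ou \<inter> (S - T) \<subseteq> X interior_of M" by (rule interior_of_maximal)
      moreover have "x \<in> Ou \<inter> (S - T)" using O A(3) xS xT by blast
      ultimately show ?thesis by blast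
    qed
    ultimately show False using nap by auto
  qed
qed

end
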